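(* Let $p>p_0\ge1$ and $M$ be integers with $p_0\le M\le p$, let $f_n\in C[0,1]^p$, and suppose there exist $\widetilde f_n\in C[0,1]^{p_0}$ and $\eta_n>0$ with $\sup_{\mathbf{x}\in[0,1]^p}|f_n(\mathbf{x})-\widetilde f_n(x_1,\ldots,x_{p_0})|<\eta_n$, and a positive constant $\tau$ with $|\int_{[0,1]^p}x_jf_n(\mathbf{x})d\mathbf{x}-\frac12\int_{[0,1]^p}f_n(\mathbf{x})d\mathbf{x}|>\tau$ for each $j=1,\ldots,p_0$. Then for every $\mathcal{A}_1\subset Z_p$ with $|\mathcal{A}_1|=M$ and $\mathcal{A}_0\setminus\mathcal{A}_1\ne\emptyset$, $$\int_{[0,1]^p}\left(f_n(\mathbf{x})-\beta_0(\mathcal{A}_1)-\boldsymbol\beta_{Z_p}(\mathcal{A}_1)'\mathbf{x}\right)^2d\mathbf{x}-\int_{[0,1]^p}\left(f_n(\mathbf{x})-\beta_0(\mathcal{A}_0)-\boldsymbol\beta_{Z_p}(\mathcal{A}_0)'\mathbf{x}\right)^2d\mathbf{x}\ge12\tau^2-12(M-p_0+1)\eta_n^2.$$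
   Context: $Z_d=\{1,\ldots,d\}$, $\mathcal{A}_0=Z_{p_0}$. For $\mathcal{A}\subset Z_p$ and $\mathbf{x}\in[0,1]^p$, $\mathbf{x}_{\mathcal{A}}$ is the subvector of coordinates in $\mathcal{A}$. $(\beta_0(\mathcal{A}),\boldsymbol\beta(\mathcal{A})')'\in\mathbb{R}\times\mathbb{R}^{|\mathcal{A}|}$ minimizes $\int_{[0,1]^p}[f_n(\mathbf{x})-\phi_0-\boldsymbol\phi'\mathbf{x}_{\mathcal{A}}]^2d\mathbf{x}$ over $(\phi_0,\boldsymbol\phi)$, and $\boldsymbol\beta_{Z_p}(\mathcal{A})\in\mathbb{R}^p$ equals $\boldsymbol\beta(\mathcal{A})$ on coordinates in $\mathcal{A}$ and $0$ elsewhere. *)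

theory Defs
  imports "HOL-Probability.Probability"
begin

text \<open>Points of [0,1]^p are functions x :: nat => real on the index set Z_p = {1..p}
  (extensional, i.e. undefined outside {1..p}), as in the product measure space.\<close>

definition cube :: "nat \<Rightarrow> (nat \<Rightarrow> real) set" where
  "cube p = PiE {1..p} (\<lambda>_. {0..1})"

definition cube_measure :: "nat \<Rightarrow> (nat \<Rightarrow> real) measure" where
  "cube_measure p = PiM {1..p} (\<lambda>_. restrict_space lborel {0..1})"

definition lsq_risk :: "nat \<Rightarrow> ((nat \<Rightarrow> real) \<Rightarrow> real) \<Rightarrow> nat set \<Rightarrow> real \<Rightarrow> (nat \<Rightarrow> real) \<Rightarrow> real" where
  "lsq_risk p f A phi0 phi =
     (\<integral>x. (f x - phi0 - (\<Sum>j\<in>A. phi j * x j))\<^sup>2 \<partial>cube_measure p)"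

text \<open>(beta_0(A), beta_{Z_p}(A)): a minimiser of the risk over (phi0, phi) with phi
  supported on A (phi is the zero-extension to Z_p of a vector in R^{|A|}).\<close>
definition beta_pair :: "nat \<Rightarrow> ((nat \<Rightarrow> real) \<Rightarrow> real) \<Rightarrow> nat set \<Rightarrow> real \<times> (nat \<Rightarrow> real)" where
  "beta_pair p f A = (SOME (b0, b). (\<forall>j. j \<notin> A \<longrightarrow> b j = 0) \<and>
      (\<forall>c0 c. (\<forall>j. j \<notin> A \<longrightarrow> c j = 0) \<longrightarrow> lsq_risk p f A b0 b \<le> lsq_risk p f A c0 c))"

definition beta0 :: "nat \<Rightarrow> ((nat \<Rightarrow> real) \<Rightarrow> real) \<Rightarrow> nat set \<Rightarrow> real" where
  "beta0 p f A = fst (beta_pair p f A)"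

definition betaZ :: "nat \<Rightarrow> ((nat \<Rightarrow> real) \<Rightarrow> real) \<Rightarrow> nat set \<Rightarrow> nat \<Rightarrow> real" where
  "betaZ p f A = snd (beta_pair p f A)"

end

theory Submission
  imports Defs
begin


lemma cube_eq: "cube p = PiE UNIV (\<lambda>i. if i \<in> {1..p} then {0..1::real} else {undefined})"
  unfolding cube_def PiE_def extensional_def Pi_def by auto

lemma compact_cube: "compact (cube p)"
proof -
  have "compactin (product_topology (\<lambda>_. euclidean) UNIV)
     (PiE UNIV (\<lambda>i. if i \<in> {1..p} then {0..1::real} else {undefined}))"
    by (simp add: compactin_PiE)
  then show ?thesis unfolding cube_eq euclidean_product_topology by simp
qed

lemma space_cm: "space (cube_measure p) = cube p"
  unfolding cube_measure_def cube_def space_PiM by simp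

lemma prob_cm: "prob_space (cube_measure p)"
  unfolding cube_measure_def
  by (rule prob_space_PiM) (auto intro!: prob_space_restrict_space)

lemma meas_coord0: "(\<lambda>x. x i) \<in> borel_measurable (cube_measure p)"
proof (cases "i \<in> {1..p}")
  case True
  have h1: "(\<lambda>x. x i) \<in> cube_measure p \<rightarrow>\<^sub>M restrict_space lborel {0..1}"
    unfolding cube_measure_def using True by (rule measurable_component_singleton)
  have h2: "(\<lambda>y. y) \<in> restrict_space lborel {0..1::real} \<rightarrow>\<^sub>M borel"
    by (rule measurable_restrict_space1) simp
  show ?thesis using measurable_comp[OF h1 h2] by (simp add: comp_def)
next
  case False
  have e: "\<And>x. x \<in> space (cube_measure p) \<Longrightarrow> x i = undefined"
    using False by (auto simp: space_cm cube_def PiE_def extensional_def)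
  have "(\<lambda>x. undefined::real) \<in> borel_measurable (cube_measure p)" by simp
  then show ?thesis by (rule measurable_cong[THEN iffD2, rotated]) (simp add: e)
qed

lemma meas_cm_id: "(\<lambda>x. x) \<in> cube_measure p \<rightarrow>\<^sub>M restrict_space borel (cube p)"
proof (rule measurable_restrict_space2)
  show "(\<lambda>x. x) \<in> space (cube_measure p) \<rightarrow> cube p" by (simp add: space_cm)
  have "(\<lambda>x. x) \<in> cube_measure p \<rightarrow>\<^sub>M PiM UNIV (\<lambda>_. (borel :: real measure))"
    by (rule measurable_PiM_single') (simp_all add: meas_coord0 space_PiM)
  moreover have "measurable (cube_measure p) (PiM UNIV (\<lambda>_::nat. (borel :: real measure))) = measurable (cube_measure p) borel"
    by (rule measurable_cong_sets[OF refl sets_PiM_equal_borel])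
  ultimately show "(\<lambda>x. x) \<in> cube_measure p \<rightarrow>\<^sub>M borel" by simp
qed

lemma meas_cont:
  assumes "continuous_on (cube p) f"
  shows "(f :: _ \<Rightarrow> real) \<in> borel_measurable (cube_measure p)"
  using measurable_comp[OF meas_cm_id borel_measurable_continuous_on_restrict[OF assms]]
  by (simp add: comp_def)

lemma bounded_cont:
  assumes "continuous_on (cube p) (f :: _ \<Rightarrow> real)"
  shows "\<exists>B. \<forall>x\<in>cube p. \<bar>f x\<bar> \<le> B"
proof -
  have "compact (f ` cube p)" using compact_continuous_image[OF assms compact_cube] .
  then obtain B where "\<forall>y\<in>f ` cube p. norm y \<le> B"
    using compact_imp_bounded bounded_iff by metis
  then show ?thesis by auto
qed



lemma sigfin: "product_sigma_finite (\<lambda>_::nat. restrict_space lborel {0..1::real})"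
  unfolding product_sigma_finite_def
  by (auto intro!: prob_space_imp_sigma_finite prob_space_restrict_space)

lemma int01:
  fixes F f :: "real \<Rightarrow> real"
  assumes "\<And>x. 0 \<le> x \<Longrightarrow> x \<le> 1 \<Longrightarrow> (F has_real_derivative f x) (at x)"
    and "continuous_on {0..1} f"
  shows "(\<integral>y. f y \<partial>restrict_space lborel {0..1}) = F 1 - F 0"
proof -
  have "(\<integral>y. f y \<partial>restrict_space lborel {0..1}) = integral\<^sup>L lborel (\<lambda>x. indicator {0..1} x *\<^sub>R f x)"
    by (rule integral_restrict_space) simp
  also have "\<dots> = F 1 - F 0"
    by (rule integral_FTC_atLeastAtMost)
       (auto intro: assms has_field_derivative_at_within simp: has_real_derivative_iff_has_vector_derivative[symmetric])
  finally show ?thesis .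
qed

lemma meas01[simp]: "measure (restrict_space lborel {0..1::real}) {0..1} = 1"
  by (simp add: measure_restrict_space)

lemma int_one: "(\<integral>y. 1 \<partial>restrict_space lborel {0..1::real}) = (1::real)"
proof -
  have "(\<integral>y. 1 \<partial>restrict_space lborel {0..1::real}) = (\<lambda>x::real. x) 1 - (\<lambda>x. x) (0::real)"
    by (rule int01) (auto intro!: derivative_eq_intros continuous_intros)
  then show ?thesis by (simp only: diff_zero)
qed

lemma int_z: "(\<integral>y. y - 1/2 \<partial>restrict_space lborel {0..1::real}) = 0"
proof -
  have "(\<integral>y. y - 1/2 \<partial>restrict_space lborel {0..1::real}) = (\<lambda>x. x^2/2 - x/2) 1 - (\<lambda>x. x^2/2 - x/2) (0::real)"
    by (rule int01) (auto intro!: derivative_eq_intros continuous_intros)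
  then show ?thesis by simp
qed

lemma int_z2: "(\<integral>y. (y - 1/2)^2 \<partial>restrict_space lborel {0..1::real}) = 1/12"
proof -
  have "(\<integral>y. (y - 1/2)^2 \<partial>restrict_space lborel {0..1::real}) = (\<lambda>x. (x - 1/2)^3/3) 1 - (\<lambda>x. (x - 1/2)^3/3) (0::real)"
    by (rule int01) (auto intro!: derivative_eq_intros continuous_intros simp: power2_eq_square)
  then show ?thesis by (simp add: power3_eq_cube)
qed

lemma meas_coord: "(\<lambda>x. x i) \<in> borel_measurable (cube_measure p)"
  by (rule meas_coord0)

lemma prod_split:
  fixes \<phi> :: "real \<Rightarrow> real" and h :: "(nat \<Rightarrow> real) \<Rightarrow> real"
  assumes i: "i \<in> {1..p}" and phm: "\<phi> \<in> borel_measurable borel" and phb: "\<forall>y\<in>{0..1}. \<bar>\<phi> y\<bar> \<le> C"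
    and hm: "h \<in> borel_measurable (cube_measure p)" and hb: "\<forall>x\<in>cube p. \<bar>h x\<bar> \<le> B"
    and inv: "\<forall>x\<in>cube p. \<forall>y\<in>{0..1}. h (x(i:=y)) = h x"
  shows "(\<integral>x. \<phi> (x i) * h x \<partial>cube_measure p) =
     (\<integral>y. \<phi> y \<partial>restrict_space lborel {0..1}) *
     (\<integral>x. h (x(i:=0)) \<partial>PiM ({1..p}-{i}) (\<lambda>_. restrict_space lborel {0..1}))"
proof -
  interpret P: product_sigma_finite "\<lambda>_::nat. restrict_space lborel {0..1::real}" by (rule sigfin)
  interpret Q: prob_space "cube_measure p" by (rule prob_cm)
  let ?M = "\<lambda>_::nat. restrict_space lborel {0..1::real}"
  let ?I = "{1..p}-{i}"
  have eq: "cube_measure p = PiM (insert i ?I) ?M"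
    using i by (simp add: cube_measure_def insert_absorb)
  have int: "integrable (cube_measure p) (\<lambda>x. \<phi> (x i) * h x)"
  proof (rule Q.integrable_const_bound[where B="\<bar>C\<bar> * \<bar>B\<bar>"])
    show "AE x in cube_measure p. norm (\<phi> (x i) * h x) \<le> \<bar>C\<bar> * \<bar>B\<bar>"
    proof (rule AE_I2)
      fix x assume x: "x \<in> space (cube_measure p)"
      then have "x i \<in> {0..1}" using i by (auto simp: space_cm cube_def)
      then have a: "\<bar>\<phi> (x i)\<bar> \<le> \<bar>C\<bar>" using phb by force
      have b: "\<bar>h x\<bar> \<le> \<bar>B\<bar>" using hb x by (force simp: space_cm)
      show "norm (\<phi> (x i) * h x) \<le> \<bar>C\<bar> * \<bar>B\<bar>"
        using mult_mono[OF a b] by (simp add: abs_mult)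
    qed
    show "(\<lambda>x. \<phi> (x i) * h x) \<in> borel_measurable (cube_measure p)"
      using measurable_comp[OF meas_coord phm] hm by (simp add: comp_def)
  qed
  have "(\<integral>x. \<phi> (x i) * h x \<partial>cube_measure p) =
     (\<integral>x. (\<integral>y. \<phi> ((x(i:=y)) i) * h (x(i:=y)) \<partial>?M i) \<partial>PiM ?I ?M)"
    unfolding eq by (rule P.product_integral_insert) (use int eq in auto)
  also have "\<dots> = (\<integral>x. (\<integral>y. \<phi> y \<partial>?M i) * h (x(i:=0)) \<partial>PiM ?I ?M)"
  proof (rule Bochner_Integration.integral_cong[OF refl])
    fix x assume x: "x \<in> space (PiM ?I ?M)"
    have x0: "x(i:=0) \<in> cube p"
      using x i by (auto simp: space_PiM cube_def PiE_def extensional_def Pi_def)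
    have "(\<integral>y. \<phi> ((x(i:=y)) i) * h (x(i:=y)) \<partial>?M i) = (\<integral>y. \<phi> y * h (x(i:=0)) \<partial>?M i)"
    proof (rule Bochner_Integration.integral_cong[OF refl])
      fix y assume "y \<in> space (?M i)"
      then have y: "y \<in> {0..1}" by simp
      have "h (x(i:=y)) = h ((x(i:=0))(i:=y))" by simp
      also have "\<dots> = h (x(i:=0))" using inv x0 y by blast
      finally show "\<phi> ((x(i:=y)) i) * h (x(i:=y)) = \<phi> y * h (x(i:=0))" by simp
    qed
    then show "(\<integral>y. \<phi> ((x(i:=y)) i) * h (x(i:=y)) \<partial>?M i) = (\<integral>y. \<phi> y \<partial>?M i) * h (x(i:=0))"
      by simp
  qed
  also have "\<dots> = (\<integral>y. \<phi> y \<partial>?M i) * (\<integral>x. h (x(i:=0)) \<partial>PiM ?I ?M)"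
    by simp
  finally show ?thesis .
qed

lemma prod_split2:
  fixes \<phi> :: "real \<Rightarrow> real" and h :: "(nat \<Rightarrow> real) \<Rightarrow> real"
  assumes i: "i \<in> {1..p}" and phm: "\<phi> \<in> borel_measurable borel" and phb: "\<forall>y\<in>{0..1}. \<bar>\<phi> y\<bar> \<le> C"
    and hm: "h \<in> borel_measurable (cube_measure p)" and hb: "\<forall>x\<in>cube p. \<bar>h x\<bar> \<le> B"
    and inv: "\<forall>x\<in>cube p. \<forall>y\<in>{0..1}. h (x(i:=y)) = h x"
  shows "(\<integral>x. \<phi> (x i) * h x \<partial>cube_measure p) =
     (\<integral>y. \<phi> y \<partial>restrict_space lborel {0..1}) * (\<integral>x. h x \<partial>cube_measure p)"
proof -
  have one: "\<forall>y\<in>{0..1::real}. \<bar>(1::real)\<bar> \<le> 1" by simp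
  have "(\<integral>x. (\<lambda>_. 1) (x i) * h x \<partial>cube_measure p) =
     (\<integral>y. (\<lambda>_. 1) y \<partial>restrict_space lborel {0..1::real}) *
     (\<integral>x. h (x(i:=0)) \<partial>PiM ({1..p}-{i}) (\<lambda>_. restrict_space lborel {0..1}))"
    by (rule prod_split[OF i measurable_const one hm hb inv]) simp
  then have "(\<integral>x. h x \<partial>cube_measure p) =
     (\<integral>x. h (x(i:=0)) \<partial>PiM ({1..p}-{i}) (\<lambda>_. restrict_space lborel {0..1}))"
    by (simp only: int_one mult_1_left)
  note e1 = this
  show ?thesis by (subst e1) (rule prod_split[OF assms])
qed



definition bm :: "nat \<Rightarrow> ((nat \<Rightarrow> real) \<Rightarrow> real) \<Rightarrow> bool" where
  "bm p f \<longleftrightarrow> f \<in> borel_measurable (cube_measure p) \<and> (\<exists>B. \<forall>x\<in>cube p. \<bar>f x\<bar> \<le> B)"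

lemma bm_const[simp]: "bm p (\<lambda>_. c)"
  unfolding bm_def by auto

lemma bm_coord[simp]: "i \<in> {1..p} \<Longrightarrow> bm p (\<lambda>x. x i)"
  unfolding bm_def
proof (intro conjI meas_coord exI[of _ 1] ballI)
  fix x assume "i \<in> {1..p}" "x \<in> cube p"
  then have "x i \<in> {0..1}" by (auto simp: cube_def PiE_iff)
  then show "\<bar>x i\<bar> \<le> 1" by auto
qed

lemma bm_add[simp]: "bm p f \<Longrightarrow> bm p g \<Longrightarrow> bm p (\<lambda>x. f x + g x)"
  unfolding bm_def
proof (elim conjE exE, intro conjI)
  fix B1 B2 assume "\<forall>x\<in>cube p. \<bar>f x\<bar> \<le> B1" "\<forall>x\<in>cube p. \<bar>g x\<bar> \<le> B2"
  then show "\<exists>B. \<forall>x\<in>cube p. \<bar>f x + g x\<bar> \<le> B"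
    by (intro exI[of _ "B1 + B2"]) (auto intro: order.trans[OF abs_triangle_ineq] add_mono)
qed auto

lemma bm_mult[simp]: "bm p f \<Longrightarrow> bm p g \<Longrightarrow> bm p (\<lambda>x. f x * g x)"
  unfolding bm_def
proof (elim conjE exE, intro conjI)
  fix B1 B2 assume "\<forall>x\<in>cube p. \<bar>f x\<bar> \<le> B1" "\<forall>x\<in>cube p. \<bar>g x\<bar> \<le> B2"
  then show "\<exists>B. \<forall>x\<in>cube p. \<bar>f x * g x\<bar> \<le> B"
    by (intro exI[of _ "B1 * B2"]) (auto simp: abs_mult intro!: mult_mono)
qed auto

lemma bm_uminus[simp]: "bm p f \<Longrightarrow> bm p (\<lambda>x. - f x)"
  unfolding bm_def by auto

lemma bm_diff[simp]: "bm p f \<Longrightarrow> bm p g \<Longrightarrow> bm p (\<lambda>x. f x - g x)"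
  using bm_add[of p f "\<lambda>x. - g x"] by simp

lemma bm_power2[simp]: "bm p f \<Longrightarrow> bm p (\<lambda>x. (f x)^2)"
  using bm_mult[of p f f] by (simp add: power2_eq_square)

lemma bm_sum[simp]: "(\<And>j. j \<in> A \<Longrightarrow> bm p (f j)) \<Longrightarrow> bm p (\<lambda>x. \<Sum>j\<in>A. f j x)"
proof (induct A rule: infinite_finite_induct)
  case (insert a F)
  then show ?case using bm_add[of p "f a" "\<lambda>x. \<Sum>j\<in>F. f j x"] by simp
qed auto

lemma bm_int[simp]: "bm p f \<Longrightarrow> integrable (cube_measure p) f"
proof -
  assume "bm p f"
  then obtain B where m: "f \<in> borel_measurable (cube_measure p)" and b: "\<forall>x\<in>cube p. \<bar>f x\<bar> \<le> B"
    unfolding bm_def by blast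
  interpret Q: prob_space "cube_measure p" by (rule prob_cm)
  show ?thesis
    by (rule Q.integrable_const_bound[where B=B]) (use m b in \<open>auto simp: space_cm\<close>)
qed

lemma bm_bound: "bm p f \<Longrightarrow> \<exists>B. \<forall>x\<in>cube p. \<bar>f x\<bar> \<le> B"
  unfolding bm_def by blast

lemma bm_meas: "bm p f \<Longrightarrow> f \<in> borel_measurable (cube_measure p)"
  unfolding bm_def by blast

lemma meas_cm[simp]: "measure (cube_measure p) (space (cube_measure p)) = 1"
  using prob_space.prob_space[OF prob_cm] .

lemma int_const_cm[simp]: "(\<integral>x. c \<partial>cube_measure p) = (c::real)"
proof -
  interpret Q: prob_space "cube_measure p" by (rule prob_cm)
  show ?thesis by (simp add: Q.prob_space)
qed

lemma mzh:
  assumes i: "i \<in> {1..p}" and h: "bm p h" and inv: "\<forall>x\<in>cube p. \<forall>y\<in>{0..1}. h (x(i:=y)) = h x"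
  shows "(\<integral>x. (x i - 1/2) * h x \<partial>cube_measure p) = 0"
proof -
  obtain B where hb: "\<forall>x\<in>cube p. \<bar>h x\<bar> \<le> B" using bm_bound[OF h] by blast
  have "(\<integral>x. (\<lambda>y. y - 1/2) (x i) * h x \<partial>cube_measure p) =
     (\<integral>y. (\<lambda>y. y - 1/2) y \<partial>restrict_space lborel {0..1::real}) * (\<integral>x. h x \<partial>cube_measure p)"
    by (rule prod_split2[OF i _ _ bm_meas[OF h] hb inv, where C=1]) auto
  then show ?thesis using int_z by simp
qed

lemma mz:
  assumes i: "i \<in> {1..p}"
  shows "(\<integral>x. (x i - 1/2) \<partial>cube_measure p) = 0"
  using mzh[OF i bm_const[of p 1]] by simp

lemma mzz:
  assumes i: "i \<in> {1..p}" and k: "k \<in> {1..p}"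
  shows "(\<integral>x. (x i - 1/2) * (x k - 1/2) \<partial>cube_measure p) = (if i = k then 1/12 else 0)"
proof (cases "i = k")
  case True
  have "(\<integral>x. (\<lambda>y. (y - 1/2)^2) (x i) * (\<lambda>_. 1) x \<partial>cube_measure p) =
     (\<integral>y. (\<lambda>y. (y - 1/2)^2) y \<partial>restrict_space lborel {0..1::real}) * (\<integral>x. (\<lambda>_. 1) x \<partial>cube_measure p)"
  proof (rule prod_split2[OF i _ _ bm_meas[OF bm_const] , where C=1 and B=1])
    show "\<forall>y\<in>{0..1}. \<bar>(y - 1/2)^2\<bar> \<le> (1::real)"
    proof
      fix y :: real assume "y \<in> {0..1}"
      then have "\<bar>y - 1/2\<bar> \<le> 1" by auto
      then show "\<bar>(y - 1/2)^2\<bar> \<le> 1" by (simp add: abs_square_le_1)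
    qed
  qed auto
  then show ?thesis using True int_z2 by (simp add: power2_eq_square)
next
  case False
  have "(\<integral>x. (x i - 1/2) * (x k - 1/2) \<partial>cube_measure p) = 0"
    by (rule mzh[OF i]) (use k False in auto)
  then show ?thesis using False by simp
qed



lemma risk:
  assumes h: "bm p h" and A: "A \<subseteq> {1..p}"
  shows "lsq_risk p h A c0 c =
     (\<integral>x. (h x)^2 \<partial>cube_measure p)
     - 2 * (c0 + (\<Sum>j\<in>A. c j / 2)) * (\<integral>x. h x \<partial>cube_measure p)
     - 2 * (\<Sum>j\<in>A. c j * (\<integral>x. (x j - 1/2) * h x \<partial>cube_measure p))
     + (c0 + (\<Sum>j\<in>A. c j / 2))^2 + (\<Sum>j\<in>A. (c j)^2 / 12)"
proof -
  have finA: "finite A" using A by (rule finite_subset) simp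
  define d0 where "d0 = c0 + (\<Sum>j\<in>A. c j / 2)"
  define S where "S x = (\<Sum>j\<in>A. c j * (x j - 1/2))" for x :: "nat \<Rightarrow> real"
  have bmz: "bm p (\<lambda>x. x j - 1/2)" if "j \<in> A" for j using that A by (intro bm_diff bm_coord bm_const) auto
  have bmS: "bm p S" unfolding S_def using bmz by (intro bm_sum bm_mult bm_const) auto
  have sx: "(\<Sum>j\<in>A. c j * x j) = S x + (\<Sum>j\<in>A. c j / 2)" for x
    unfolding S_def sum.distrib[symmetric] by (rule sum.cong) (auto simp: algebra_simps)
  have pt: "(h x - c0 - (\<Sum>j\<in>A. c j * x j))^2 =
      (h x)^2 + d0^2 + (S x)^2 - 2*d0*h x - 2*(h x * S x) + 2*d0*S x" for x
    unfolding sx d0_def by (simp add: power2_eq_square algebra_simps)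
  have jA: "j \<in> {1..p}" if "j \<in> A" for j using that A by auto
  have iS: "(\<integral>x. S x \<partial>cube_measure p) = 0"
    unfolding S_def using bmz
  proof (subst Bochner_Integration.integral_sum)
    show "(\<Sum>j\<in>A. \<integral>x. c j * (x j - 1/2) \<partial>cube_measure p) = 0"
      using mz[OF jA] by (intro sum.neutral) auto
  qed (auto intro!: bm_int bm_mult)
  have hS: "h x * S x = (\<Sum>j\<in>A. c j * ((x j - 1/2) * h x))" for x
    unfolding S_def sum_distrib_left by (rule sum.cong) (auto simp: algebra_simps)
  have ihS: "(\<integral>x. h x * S x \<partial>cube_measure p) = (\<Sum>j\<in>A. c j * (\<integral>x. (x j - 1/2) * h x \<partial>cube_measure p))"
    unfolding hS using A bmz h
    by (subst Bochner_Integration.integral_sum) auto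
  have SS: "(S x)^2 = (\<Sum>j\<in>A. \<Sum>k\<in>A. c j * c k * ((x j - 1/2) * (x k - 1/2)))" for x
    unfolding S_def power2_eq_square sum_product by (rule sum.cong[OF refl], rule sum.cong) (auto simp: algebra_simps)
  have iSS: "(\<integral>x. (S x)^2 \<partial>cube_measure p) = (\<Sum>j\<in>A. (c j)^2 / 12)"
  proof -
    have "(\<integral>x. (S x)^2 \<partial>cube_measure p) =
        (\<Sum>j\<in>A. \<Sum>k\<in>A. c j * c k * (\<integral>x. (x j - 1/2) * (x k - 1/2) \<partial>cube_measure p))"
    proof -
      have "(\<integral>x. (S x)^2 \<partial>cube_measure p) =
          (\<Sum>j\<in>A. \<integral>x. (\<Sum>k\<in>A. c j * c k * ((x j - 1/2) * (x k - 1/2))) \<partial>cube_measure p)"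
        unfolding SS by (rule Bochner_Integration.integral_sum) (use bmz in \<open>auto intro!: bm_int bm_sum bm_mult\<close>)
      also have "\<dots> = (\<Sum>j\<in>A. \<Sum>k\<in>A. c j * c k * (\<integral>x. (x j - 1/2) * (x k - 1/2) \<partial>cube_measure p))"
      proof (rule sum.cong[OF refl])
        fix j assume j: "j \<in> A"
        show "(\<integral>x. (\<Sum>k\<in>A. c j * c k * ((x j - 1/2) * (x k - 1/2))) \<partial>cube_measure p) =
          (\<Sum>k\<in>A. c j * c k * (\<integral>x. (x j - 1/2) * (x k - 1/2) \<partial>cube_measure p))"
          by (subst Bochner_Integration.integral_sum) (use bmz j in \<open>auto intro!: bm_int bm_mult\<close>)
      qed
      finally show ?thesis .
    qed
    also have "\<dots> = (\<Sum>j\<in>A. \<Sum>k\<in>A. if k = j then c j * c j / 12 else 0)"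
      using A by (intro sum.cong refl) (auto simp: mzz subset_iff)
    also have "\<dots> = (\<Sum>j\<in>A. (c j)^2 / 12)"
      using finA by (simp add: power2_eq_square)
    finally show ?thesis .
  qed
  have "lsq_risk p h A c0 c = (\<integral>x. (h x)^2 + d0^2 + (S x)^2 - 2*d0*h x - 2*(h x * S x) + 2*d0*S x \<partial>cube_measure p)"
    unfolding lsq_risk_def pt ..
  also have "\<dots> = (\<integral>x. (h x)^2 \<partial>cube_measure p) + d0^2 + (\<integral>x. (S x)^2 \<partial>cube_measure p)
      - 2*d0*(\<integral>x. h x \<partial>cube_measure p) - 2*(\<integral>x. h x * S x \<partial>cube_measure p) + 2*d0*(\<integral>x. S x \<partial>cube_measure p)"
    using h bmS by (simp add: Bochner_Integration.integral_add Bochner_Integration.integral_diff)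
  finally show ?thesis unfolding iS ihS iSS d0_def by simp
qed



definition Cf :: "nat \<Rightarrow> ((nat \<Rightarrow> real) \<Rightarrow> real) \<Rightarrow> nat \<Rightarrow> real" where
  "Cf p h j = (\<integral>x. (x j - 1/2) * h x \<partial>cube_measure p)"

definition Vr :: "nat \<Rightarrow> ((nat \<Rightarrow> real) \<Rightarrow> real) \<Rightarrow> nat set \<Rightarrow> real" where
  "Vr p h A = (\<integral>x. (h x)^2 \<partial>cube_measure p) - (\<integral>x. h x \<partial>cube_measure p)^2 - 12 * (\<Sum>j\<in>A. (Cf p h j)^2)"

lemma risk_decomp:
  assumes h: "bm p h" and A: "A \<subseteq> {1..p}"
  shows "lsq_risk p h A c0 c = Vr p h A + (c0 + (\<Sum>j\<in>A. c j / 2) - (\<integral>x. h x \<partial>cube_measure p))^2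
     + (\<Sum>j\<in>A. (c j - 12 * Cf p h j)^2 / 12)"
proof -
  have e: "(\<Sum>j\<in>A. (c j - 12 * Cf p h j)^2 / 12) =
      (\<Sum>j\<in>A. (c j)^2 / 12) - 2 * (\<Sum>j\<in>A. c j * Cf p h j) + 12 * (\<Sum>j\<in>A. (Cf p h j)^2)"
  proof -
    have "(\<Sum>j\<in>A. (c j - 12 * Cf p h j)^2 / 12) =
        (\<Sum>j\<in>A. (c j)^2 / 12 - 2 * (c j * Cf p h j) + 12 * (Cf p h j)^2)"
      by (rule sum.cong) (auto simp: power2_eq_square field_simps)
    also have "\<dots> = (\<Sum>j\<in>A. (c j)^2 / 12) - 2 * (\<Sum>j\<in>A. c j * Cf p h j) + 12 * (\<Sum>j\<in>A. (Cf p h j)^2)"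
      by (simp add: sum.distrib sum_subtractf sum_distrib_left)
    finally show ?thesis .
  qed
  show ?thesis
    unfolding risk[OF h A] Cf_def[symmetric] e Vr_def by (simp add: power2_eq_square algebra_simps)
qed

lemma risk_ge:
  assumes h: "bm p h" and A: "A \<subseteq> {1..p}"
  shows "Vr p h A \<le> lsq_risk p h A c0 c"
  unfolding risk_decomp[OF h A] by (auto intro!: add_nonneg_nonneg sum_nonneg)

lemma risk_at:
  assumes h: "bm p h" and A: "A \<subseteq> {1..p}"
    and c: "\<And>j. j \<in> A \<Longrightarrow> c j = 12 * Cf p h j"
  shows "lsq_risk p h A ((\<integral>x. h x \<partial>cube_measure p) - (\<Sum>j\<in>A. c j / 2)) c = Vr p h A"
  unfolding risk_decomp[OF h A] using c by simp

lemma beta_val: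
  assumes h: "bm p h" and A: "A \<subseteq> {1..p}"
  shows "lsq_risk p h A (beta0 p h A) (betaZ p h A) = Vr p h A"
    and "\<And>j. j \<notin> A \<Longrightarrow> betaZ p h A j = 0"
proof -
  define Q where "Q = (\<lambda>b0 (b :: nat \<Rightarrow> real). (\<forall>j. j \<notin> A \<longrightarrow> b j = 0) \<and>
      (\<forall>c0 c. (\<forall>j. j \<notin> A \<longrightarrow> c j = 0) \<longrightarrow> lsq_risk p h A b0 b \<le> lsq_risk p h A c0 c))"
  define w where "w = (\<lambda>j. if j \<in> A then 12 * Cf p h j else 0)"
  have wv: "lsq_risk p h A ((\<integral>x. h x \<partial>cube_measure p) - (\<Sum>j\<in>A. w j / 2)) w = Vr p h A"
    by (rule risk_at[OF h A]) (simp add: w_def)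
  have "Q ((\<integral>x. h x \<partial>cube_measure p) - (\<Sum>j\<in>A. w j / 2)) w"
    unfolding Q_def wv using risk_ge[OF h A] by (auto simp: w_def)
  then have ex: "\<exists>z. case z of (b0, b) \<Rightarrow> Q b0 b" by auto
  have "case beta_pair p h A of (b0, b) \<Rightarrow> Q b0 b"
    unfolding beta_pair_def Q_def[symmetric] by (rule someI_ex[OF ex])
  then have q: "Q (beta0 p h A) (betaZ p h A)"
    unfolding beta0_def betaZ_def by (simp add: case_prod_unfold)
  then show "\<And>j. j \<notin> A \<Longrightarrow> betaZ p h A j = 0" unfolding Q_def by blast
  have "lsq_risk p h A (beta0 p h A) (betaZ p h A) \<le> Vr p h A"
    using q unfolding Q_def using wv by (metis w_def)
  then show "lsq_risk p h A (beta0 p h A) (betaZ p h A) = Vr p h A"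
    using risk_ge[OF h A] by (simp add: order_antisym)
qed



lemma Cf_f:
  assumes "bm p f" "j \<in> {1..p}"
  shows "Cf p f j = (\<integral>x. x j * f x \<partial>cube_measure p) - 1/2 * (\<integral>x. f x \<partial>cube_measure p)"
proof -
  have "Cf p f j = (\<integral>x. x j * f x - 1/2 * f x \<partial>cube_measure p)"
    unfolding Cf_def by (simp add: algebra_simps)
  also have "\<dots> = (\<integral>x. x j * f x \<partial>cube_measure p) - (\<integral>x. 1/2 * f x \<partial>cube_measure p)"
    by (rule Bochner_Integration.integral_diff) (use assms in \<open>auto intro!: bm_int bm_mult\<close>)
  finally show ?thesis by simp
qed

lemma Cf_diff:
  assumes "bm p f" "bm p g" "j \<in> {1..p}"
  shows "Cf p (\<lambda>x. f x - g x) j = Cf p f j - Cf p g j"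
proof -
  have "Cf p (\<lambda>x. f x - g x) j = (\<integral>x. (x j - 1/2) * f x - (x j - 1/2) * g x \<partial>cube_measure p)"
    unfolding Cf_def by (simp only: right_diff_distrib)
  also have "\<dots> = Cf p f j - Cf p g j"
    unfolding Cf_def
    by (rule Bochner_Integration.integral_diff) (use assms in \<open>auto intro!: bm_int bm_mult bm_diff\<close>)
  finally show ?thesis .
qed

lemma sum_beta:
  assumes h: "bm p h" and A: "A \<subseteq> {1..p}"
  shows "(\<Sum>j\<in>{1..p}. betaZ p h A j * x j) = (\<Sum>j\<in>A. betaZ p h A j * x j)"
  by (rule sum.mono_neutral_right) (use A beta_val(2)[OF h A] in auto)

lemma risk_stmt:
  assumes h: "bm p h" and A: "A \<subseteq> {1..p}"
  shows "(\<integral>x. (h x - beta0 p h A - (\<Sum>j\<in>{1..p}. betaZ p h A j * x j))\<^sup>2 \<partial>cube_measure p) = Vr p h A"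
  unfolding sum_beta[OF h A] beta_val(1)[OF h A, symmetric] lsq_risk_def ..

theorem lemma7:
  fixes p p0 M :: nat and f ft :: "(nat \<Rightarrow> real) \<Rightarrow> real" and eta tau :: real
    and A1 :: "nat set"
  assumes "1 \<le> p0" and "p0 < p" and "p0 \<le> M" and "M \<le> p"
    and "continuous_on (cube p) f"
    and "continuous_on (cube p0) ft"
    and "eta > 0"
    and "(SUP x\<in>cube p. \<bar>f x - ft (restrict x {1..p0})\<bar>) < eta"
    and "tau > 0"
    and "\<And>j. j \<in> {1..p0} \<Longrightarrow>
           \<bar>(\<integral>x. x j * f x \<partial>cube_measure p) - 1/2 * (\<integral>x. f x \<partial>cube_measure p)\<bar> > tau"
    and "A1 \<subseteq> {1..p}" and "card A1 = M" and "{1..p0} - A1 \<noteq> {}"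
  shows "(\<integral>x. (f x - beta0 p f A1 - (\<Sum>j\<in>{1..p}. betaZ p f A1 j * x j))\<^sup>2 \<partial>cube_measure p)
       - (\<integral>x. (f x - beta0 p f {1..p0} - (\<Sum>j\<in>{1..p}. betaZ p f {1..p0} j * x j))\<^sup>2 \<partial>cube_measure p)
       \<ge> 12 * tau\<^sup>2 - 12 * (real M - real p0 + 1) * eta\<^sup>2"
proof -
  note a = assms
  define A0 where "A0 = {1..p0}"
  have A0p: "A0 \<subseteq> {1..p}" using a(2) by (auto simp: A0_def)
  have bmf: "bm p f" unfolding bm_def using meas_cont[OF a(5)] bounded_cont[OF a(5)] by blast
  define gt where "gt = (\<lambda>x. ft (restrict x {1..p0}))"
  have rin: "restrict x {1..p0} \<in> cube p0" if "x \<in> cube p" for x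
    using that a(2) by (auto simp: cube_def PiE_iff)
  have bmgt: "bm p gt" unfolding bm_def
  proof
    have "(\<lambda>x. restrict x {1..p0}) \<in> cube_measure p \<rightarrow>\<^sub>M cube_measure p0"
      unfolding cube_measure_def by (rule measurable_restrict_subset) (use a(2) in auto)
    then show "gt \<in> borel_measurable (cube_measure p)"
      unfolding gt_def using measurable_comp[OF _ meas_cont[OF a(6)]] by (simp add: comp_def)
    obtain B where "\<forall>y\<in>cube p0. \<bar>ft y\<bar> \<le> B" using bounded_cont[OF a(6)] by blast
    then show "\<exists>B. \<forall>x\<in>cube p. \<bar>gt x\<bar> \<le> B" unfolding gt_def using rin by blast
  qed
  define g where "g = (\<lambda>x. f x - gt x)"
  have bmg: "bm p g" unfolding g_def using bmf bmgt by (rule bm_diff)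
  have gb: "\<bar>g x\<bar> < eta" if "x \<in> cube p" for x
  proof -
    obtain B1 where B1: "\<forall>x\<in>cube p. \<bar>f x\<bar> \<le> B1" using bm_bound[OF bmf] by blast
    obtain B2 where B2: "\<forall>x\<in>cube p. \<bar>gt x\<bar> \<le> B2" using bm_bound[OF bmgt] by blast
    have "bdd_above ((\<lambda>x. \<bar>f x - ft (restrict x {1..p0})\<bar>) ` cube p)"
    proof (rule bdd_aboveI2)
      fix x assume "x \<in> cube p"
      then show "\<bar>f x - ft (restrict x {1..p0})\<bar> \<le> B1 + B2"
        using B1 B2 unfolding gt_def by (smt (verit, best))
    qed
    then have "\<bar>f x - ft (restrict x {1..p0})\<bar> \<le> (SUP x\<in>cube p. \<bar>f x - ft (restrict x {1..p0})\<bar>)"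
      using that by (rule cSUP_upper[rotated])
    then show ?thesis using a(8) unfolding g_def gt_def by linarith
  qed
  have ig: "(\<integral>x. (g x)^2 \<partial>cube_measure p) \<le> eta^2"
  proof -
    have "(\<integral>x. (g x)^2 \<partial>cube_measure p) \<le> (\<integral>x. eta^2 \<partial>cube_measure p)"
    proof (rule Bochner_Integration.integral_mono)
      show "integrable (cube_measure p) (\<lambda>x. (g x)^2)" using bmg by auto
      show "integrable (cube_measure p) (\<lambda>x. eta^2)" by simp
      fix x assume "x \<in> space (cube_measure p)"
      then have "\<bar>g x\<bar> \<le> \<bar>eta\<bar>" using gb a(7) by (force simp: space_cm)
      then show "(g x)^2 \<le> eta^2" by (simp add: abs_le_square_iff)
    qed
    then show ?thesis by simp
  qed
  define S where "S = A1 - A0"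
  have Sp: "S \<subseteq> {1..p}" using a(11) by (auto simp: S_def)
  have CgS: "Cf p g j = Cf p f j" if "j \<in> S" for j
  proof -
    have j: "j \<in> {1..p}" "j \<notin> {1..p0}" using that a(11) by (auto simp: S_def A0_def)
    have "Cf p gt j = 0"
      unfolding Cf_def
    proof (rule mzh[OF j(1) bmgt], intro ballI)
      fix x :: "nat \<Rightarrow> real" and y :: real
      have "restrict (x(j:=y)) {1..p0} = restrict x {1..p0}"
        using j(2) by (auto simp: restrict_def)
      then show "gt (x(j:=y)) = gt x" unfolding gt_def by simp
    qed
    then show ?thesis unfolding g_def using Cf_diff[OF bmf bmgt j(1)] by simp
  qed
  have wS: "lsq_risk p g S ((\<integral>x. g x \<partial>cube_measure p) - (\<Sum>j\<in>S. 12 * Cf p g j / 2)) (\<lambda>j. 12 * Cf p g j) = Vr p g S"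
    by (rule risk_at[OF bmg Sp]) simp
  have "0 \<le> lsq_risk p g S ((\<integral>x. g x \<partial>cube_measure p) - (\<Sum>j\<in>S. 12 * Cf p g j / 2)) (\<lambda>j. 12 * Cf p g j)"
    unfolding lsq_risk_def by (rule Bochner_Integration.integral_nonneg) simp
  then have "0 \<le> Vr p g S" using wS by simp
  then have "12 * (\<Sum>j\<in>S. (Cf p g j)^2) \<le> (\<integral>x. (g x)^2 \<partial>cube_measure p)"
    unfolding Vr_def by (smt (verit) zero_le_power2)
  moreover have "(\<Sum>j\<in>S. (Cf p g j)^2) = (\<Sum>j\<in>S. (Cf p f j)^2)"
    by (rule sum.cong[OF refl]) (simp add: CgS)
  ultimately have bS: "12 * (\<Sum>j\<in>S. (Cf p f j)^2) \<le> eta^2" using ig by linarith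
  obtain j0 where j0: "j0 \<in> A0 - A1" using a(13) unfolding A0_def by blast
  have j0p: "j0 \<in> {1..p}" using j0 A0p by auto
  have "tau < \<bar>Cf p f j0\<bar>" using a(10)[of j0] j0 Cf_f[OF bmf j0p] unfolding A0_def by simp
  then have "tau^2 < \<bar>Cf p f j0\<bar>^2" by (rule power_strict_mono) (use a(9) in auto)
  then have t1: "tau^2 < (Cf p f j0)^2" by simp
  have finA0: "finite A0" unfolding A0_def by simp
  have finA1: "finite A1" using a(11) finite_subset by (metis finite_atLeastAtMost)
  have "(Cf p f j0)^2 \<le> (\<Sum>j\<in>A0 - A1. (Cf p f j)^2)"
    by (rule member_le_sum) (use j0 finA0 in auto)
  with t1 have bD: "tau^2 < (\<Sum>j\<in>A0 - A1. (Cf p f j)^2)" by linarith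
  have s0: "(\<Sum>j\<in>A0. (Cf p f j)^2) = (\<Sum>j\<in>A0 \<inter> A1. (Cf p f j)^2) + (\<Sum>j\<in>A0 - A1. (Cf p f j)^2)"
    by (rule sum.Int_Diff[OF finA0])
  have s1: "(\<Sum>j\<in>A1. (Cf p f j)^2) = (\<Sum>j\<in>A1 \<inter> A0. (Cf p f j)^2) + (\<Sum>j\<in>A1 - A0. (Cf p f j)^2)"
    by (rule sum.Int_Diff[OF finA1])
  have "A1 \<inter> A0 = A0 \<inter> A1" by blast
  have L: "(\<integral>x. (f x - beta0 p f A1 - (\<Sum>j\<in>{1..p}. betaZ p f A1 j * x j))\<^sup>2 \<partial>cube_measure p)
       - (\<integral>x. (f x - beta0 p f {1..p0} - (\<Sum>j\<in>{1..p}. betaZ p f {1..p0} j * x j))\<^sup>2 \<partial>cube_measure p)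
       = 12 * (\<Sum>j\<in>A0 - A1. (Cf p f j)^2) - 12 * (\<Sum>j\<in>S. (Cf p f j)^2)"
    unfolding risk_stmt[OF bmf a(11)] risk_stmt[OF bmf A0p] A0_def[symmetric] Vr_def S_def
    using s0 s1 \<open>A1 \<inter> A0 = A0 \<inter> A1\<close> by simp
  have M1: "1 \<le> real M - real p0 + 1" using a(3) by simp
  have q1: "eta^2 \<le> (real M - real p0 + 1) * eta^2"
    using mult_right_mono[OF M1 zero_le_power2[of eta]] by simp
  have q2: "12 * (real M - real p0 + 1) * eta^2 = 12 * ((real M - real p0 + 1) * eta^2)"
    by (simp only: mult.assoc)
  have "eta^2 \<le> 12 * (real M - real p0 + 1) * eta^2"
    unfolding q2 using q1 zero_le_power2[of eta] by linarith
  then show ?thesis unfolding L using bD bS by linarith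
qed

end
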